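(* Let $d\ge2$ and $n\ge2$. There is no polynomial $\varphi$ in the coefficients of $f\in\mathbb R[x]_d$ with $\varphi(f)>0$ for all $f$ in the interior of $\mathcal C_{n,d}$ and $\varphi(f)=0$ for all $f$ on the boundary of $\mathcal C_{n,d}$. Consequently $-\log\varphi(f)$ cannot be a barrier for $\mathcal C_{n,d}$ with $\varphi$ polynomial, and $\mathcal C_{n,d}$ is not representable by a linear matrix inequality (no symmetric matrix pencil $L(f)$ linear in the coefficients of $f$ with $\mathcal C_{n,d}=\{f:L(f)\succeq0\}$ and $L(f)\succ0$ on the interior).
   Context: $x=(x_1,\dots,x_n)$; $\mathbb R[x]_d$ is the space of real forms of degree $d$ with the Euclidean topology on coefficients. $\mathcal C_{n,d}=\{f\in\mathbb R[x]_d: f(x)\ge0\ \forall x\in\mathbb R^n_+\}$ is the cone of copositive forms. *)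

theory Defs
  imports "HOL-Analysis.Analysis"
begin

definition mono_exps :: "nat \<Rightarrow> nat \<Rightarrow> (nat \<Rightarrow> nat) set" where
  "mono_exps n d = {\<alpha>. (\<forall>i. n \<le> i \<longrightarrow> \<alpha> i = 0) \<and> (\<Sum>i<n. \<alpha> i) = d}"

text \<open>R[x]_d: a form is given by its coefficient vector, supported on mono_exps n d.\<close>
definition forms :: "nat \<Rightarrow> nat \<Rightarrow> ((nat \<Rightarrow> nat) \<Rightarrow> real) set" where
  "forms n d = {c. \<forall>\<alpha>. \<alpha> \<notin> mono_exps n d \<longrightarrow> c \<alpha> = 0}"

definition eval_form :: "nat \<Rightarrow> nat \<Rightarrow> ((nat \<Rightarrow> nat) \<Rightarrow> real) \<Rightarrow> (nat \<Rightarrow> real) \<Rightarrow> real" where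
  "eval_form n d c x = (\<Sum>\<alpha>\<in>mono_exps n d. c \<alpha> * (\<Prod>i<n. x i ^ \<alpha> i))"

definition copos :: "nat \<Rightarrow> nat \<Rightarrow> ((nat \<Rightarrow> nat) \<Rightarrow> real) set" where
  "copos n d = {c \<in> forms n d. \<forall>x. (\<forall>i<n. 0 \<le> x i) \<longrightarrow> 0 \<le> eval_form n d c x}"

text \<open>Euclidean topology on coefficients (via the equivalent max-norm neighbourhoods).\<close>
definition coef_near :: "nat \<Rightarrow> nat \<Rightarrow> real \<Rightarrow> ((nat \<Rightarrow> nat) \<Rightarrow> real) \<Rightarrow> ((nat \<Rightarrow> nat) \<Rightarrow> real) \<Rightarrow> bool" where
  "coef_near n d \<epsilon> c c' \<longleftrightarrow> (\<forall>\<alpha>\<in>mono_exps n d. \<bar>c \<alpha> - c' \<alpha>\<bar> < \<epsilon>)"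

definition form_interior :: "nat \<Rightarrow> nat \<Rightarrow> ((nat \<Rightarrow> nat) \<Rightarrow> real) set \<Rightarrow> ((nat \<Rightarrow> nat) \<Rightarrow> real) set" where
  "form_interior n d S = {c \<in> S. \<exists>\<epsilon>>0. \<forall>c'\<in>forms n d. coef_near n d \<epsilon> c c' \<longrightarrow> c' \<in> S}"

definition form_closure :: "nat \<Rightarrow> nat \<Rightarrow> ((nat \<Rightarrow> nat) \<Rightarrow> real) set \<Rightarrow> ((nat \<Rightarrow> nat) \<Rightarrow> real) set" where
  "form_closure n d S = {c \<in> forms n d. \<forall>\<epsilon>>0. \<exists>c'\<in>S. coef_near n d \<epsilon> c c'}"

definition form_boundary :: "nat \<Rightarrow> nat \<Rightarrow> ((nat \<Rightarrow> nat) \<Rightarrow> real) set \<Rightarrow> ((nat \<Rightarrow> nat) \<Rightarrow> real) set" where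
  "form_boundary n d S = form_closure n d S - form_interior n d S"

definition poly_in_coeffs :: "nat \<Rightarrow> nat \<Rightarrow> (((nat \<Rightarrow> nat) \<Rightarrow> real) \<Rightarrow> real) \<Rightarrow> bool" where
  "poly_in_coeffs n d \<phi> \<longleftrightarrow>
     (\<exists>B a. finite (B :: ((nat \<Rightarrow> nat) \<Rightarrow> nat) set) \<and>
        (\<forall>c. \<phi> c = (\<Sum>\<beta>\<in>B. a \<beta> * (\<Prod>\<alpha>\<in>mono_exps n d. c \<alpha> ^ \<beta> \<alpha>))))"

definition psd :: "real^'m^'m \<Rightarrow> bool" where
  "psd M \<longleftrightarrow> transpose M = M \<and> (\<forall>v. 0 \<le> v \<bullet> (M *v v))"

definition pd :: "real^'m^'m \<Rightarrow> bool" where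
  "pd M \<longleftrightarrow> transpose M = M \<and> (\<forall>v. v \<noteq> 0 \<longrightarrow> 0 < v \<bullet> (M *v v))"

definition sym_pencil :: "nat \<Rightarrow> nat \<Rightarrow> (((nat \<Rightarrow> nat) \<Rightarrow> real) \<Rightarrow> real^'m^'m) \<Rightarrow> bool" where
  "sym_pencil n d L \<longleftrightarrow>
     (\<exists>A0 A. transpose A0 = A0 \<and> (\<forall>\<alpha>. transpose (A \<alpha>) = A \<alpha>) \<and>
        (\<forall>c. L c = A0 + (\<Sum>\<alpha>\<in>mono_exps n d. c \<alpha> *\<^sub>R A \<alpha>)))"

end

theory Submission
  imports Defs "HOL-Computational_Algebra.Polynomial"
begin


lemma quad_scale:
  fixes N :: "real^'m^'m"
  shows "(c *\<^sub>R u) \<bullet> (N *v (c *\<^sub>R u)) = c * c * (u \<bullet> (N *v u))"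
  by (simp add: matrix_vector_mult_scaleR)

lemma pert:
  fixes M B :: "real^'m^'m"
  assumes pos: "\<forall>v. v \<noteq> 0 \<longrightarrow> 0 < v \<bullet> (M *v v)"
  shows "\<exists>e>0. \<forall>v. 0 \<le> v \<bullet> ((M - e *\<^sub>R B) *v v)"
proof -
  define S where "S = sphere (0::real^'m) 1"
  have cS: "compact S" unfolding S_def by simp
  have neS: "S \<noteq> {}" unfolding S_def by simp
  have c1: "continuous_on S (\<lambda>v. v \<bullet> (M *v v))" by (intro continuous_intros)
  obtain v0 where v0: "v0 \<in> S" "\<forall>v\<in>S. v0 \<bullet> (M *v v0) \<le> v \<bullet> (M *v v)"
    using continuous_attains_inf[OF cS neS c1] by blast
  define \<delta> where "\<delta> = v0 \<bullet> (M *v v0)"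
  have "v0 \<noteq> 0" using v0(1) unfolding S_def by auto
  then have dpos: "\<delta> > 0" using pos unfolding \<delta>_def by auto
  have c2: "continuous_on S (\<lambda>v. v \<bullet> (B *v v))" by (intro continuous_intros)
  have "bounded ((\<lambda>v. v \<bullet> (B *v v)) ` S)"
    by (rule compact_imp_bounded[OF compact_continuous_image[OF c2 cS]])
  then obtain K where K: "K > 0" "\<forall>y\<in>(\<lambda>v. v \<bullet> (B *v v)) ` S. norm y \<le> K"
    using bounded_pos by blast
  define e where "e = \<delta> / K"
  have epos: "e > 0" using dpos K unfolding e_def by simp
  have onS: "0 \<le> u \<bullet> ((M - e *\<^sub>R B) *v u)" if "u \<in> S" for u
  proof -
    have a: "\<delta> \<le> u \<bullet> (M *v u)" using v0 that unfolding \<delta>_def by auto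
    have b: "\<bar>u \<bullet> (B *v u)\<bar> \<le> K" using K that by auto
    have "e * (u \<bullet> (B *v u)) \<le> e * K" using b epos
      by (meson abs_le_D1 mult_left_mono order_less_imp_le)
    also have "e * K = \<delta>" unfolding e_def using K by simp
    finally have "e * (u \<bullet> (B *v u)) \<le> u \<bullet> (M *v u)" using a by simp
    moreover have "u \<bullet> ((M - e *\<^sub>R B) *v u) = u \<bullet> (M *v u) - e * (u \<bullet> (B *v u))"
      by (simp add: matrix_vector_mult_diff_rdistrib inner_diff_right
            scaleR_matrix_vector_assoc[symmetric])
    ultimately show ?thesis by simp
  qed
  have "0 \<le> v \<bullet> ((M - e *\<^sub>R B) *v v)" for v
  proof (cases "v = 0")
    case True then show ?thesis by simp
  next
    case False
    define u where "u = (1 / norm v) *\<^sub>R v"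
    have uS: "u \<in> S" unfolding u_def S_def using False by (simp add: norm_scaleR)
    have vu: "v = norm v *\<^sub>R u" unfolding u_def using False by simp
    have "v \<bullet> ((M - e *\<^sub>R B) *v v) = norm v * norm v * (u \<bullet> ((M - e *\<^sub>R B) *v u))"
      by (subst vu, subst vu, rule quad_scale)
    then show ?thesis using onS[OF uS] by simp
  qed
  then show ?thesis using epos by blast
qed

lemma psd_ker:
  fixes M :: "real^'m^'m"
  assumes "psd M" "v \<bullet> (M *v v) = 0"
  shows "M *v v = 0"
proof -
  have sym: "transpose M = M" and nn: "\<forall>w. 0 \<le> w \<bullet> (M *v w)" using assms(1) unfolding psd_def by auto
  have symq: "x \<bullet> (M *v y) = y \<bullet> (M *v x)" for x y
    by (metis dot_lmul_matrix inner_commute sym transpose_matrix_vector)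
  define w where "w = M *v v"
  define a where "a = w \<bullet> (M *v v)"
  define b where "b = w \<bullet> (M *v w)"
  have bnn: "b \<ge> 0" using nn unfolding b_def by auto
  have expand: "(v + t *\<^sub>R w) \<bullet> (M *v (v + t *\<^sub>R w)) = 2 * t * a + t * t * b" for t
    using assms(2) symq[of v w]
    by (simp add: a_def b_def matrix_vector_right_distrib matrix_vector_mult_scaleR
        inner_add_left inner_add_right algebra_simps)
  have "a = 0"
  proof (rule ccontr)
    assume "a \<noteq> 0"
    define t where "t = - a / (b + 1)"
    have "2 * t * a + t * t * b = a * a * (- b - 2) / ((b+1)*(b+1))"
    proof -
      have "b + 1 \<noteq> 0" using bnn by simp
      then show ?thesis unfolding t_def by (simp add: divide_simps) algebra
    qed
    moreover have "a * a * (- b - 2) / ((b+1)*(b+1)) < 0"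
    proof -
      have "a * a > 0" using \<open>a \<noteq> 0\<close> by (metis not_real_square_gt_zero)
      then have "a * a * (- b - 2) < 0" using bnn by (simp add: mult_pos_neg)
      then show ?thesis using bnn by (intro divide_neg_pos) auto
    qed
    ultimately show False using nn expand[of t] by (metis not_less)
  qed
  then show ?thesis unfolding a_def w_def by simp
qed

lemma det_nz_ker:
  fixes M :: "real^'m^'m"
  shows "det M \<noteq> 0 \<longleftrightarrow> (\<forall>x. M *v x = 0 \<longrightarrow> x = 0)"
  by (metis invertible_det_nz invertible_left_inverse matrix_left_invertible_ker)

lemma psd_det_pd:
  fixes M :: "real^'m^'m"
  assumes "psd M" "det M \<noteq> 0" "v \<noteq> 0"
  shows "0 < v \<bullet> (M *v v)"
proof -
  have "0 \<le> v \<bullet> (M *v v)" using assms(1) unfolding psd_def by auto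
  moreover have "v \<bullet> (M *v v) \<noteq> 0"
    using psd_ker[OF assms(1)] assms(2,3) det_nz_ker by blast
  ultimately show ?thesis by simp
qed

lemma pd_det:
  fixes M :: "real^'m^'m"
  assumes "pd M" shows "det M \<noteq> 0"
  using assms unfolding pd_def det_nz_ker by (metis inner_zero_right less_irrefl)



definition mon :: "(nat \<Rightarrow> nat) \<Rightarrow> (nat \<Rightarrow> nat) \<Rightarrow> real" where
  "mon \<beta> \<alpha> = (if \<alpha> = \<beta> then 1 else 0)"

definition xp :: "nat \<Rightarrow> (nat \<Rightarrow> nat) \<Rightarrow> (nat \<Rightarrow> real) \<Rightarrow> real" where
  "xp n \<alpha> x = (\<Prod>i<n. x i ^ \<alpha> i)"

definition ex2 :: "nat \<Rightarrow> nat \<Rightarrow> nat \<Rightarrow> nat" where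
  "ex2 a b = (\<lambda>i. if i = 0 then a else if i = 1 then b else 0)"

definition exi :: "nat \<Rightarrow> nat \<Rightarrow> nat \<Rightarrow> nat" where
  "exi d k = (\<lambda>j. if j = k then d else 0)"

lemma finite_mono: "finite (mono_exps n d)"
proof -
  have "mono_exps n d \<subseteq> (\<lambda>g i. if i < n then g i else 0) ` ({..<n} \<rightarrow>\<^sub>E {..d})"
  proof
    fix \<alpha> assume a: "\<alpha> \<in> mono_exps n d"
    then have z: "\<forall>i. n \<le> i \<longrightarrow> \<alpha> i = 0" and s: "(\<Sum>i<n. \<alpha> i) = d"
      unfolding mono_exps_def by auto
    have le: "\<alpha> i \<le> d" if "i < n" for i
      using s that member_le_sum[of i "{..<n}" \<alpha>] by auto
    define g where "g = (\<lambda>i. if i < n then \<alpha> i else undefined)"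
    have "g \<in> {..<n} \<rightarrow>\<^sub>E {..d}" unfolding g_def using le by (auto simp: PiE_def extensional_def Pi_def)
    moreover have "\<alpha> = (\<lambda>i. if i < n then g i else 0)"
      using z unfolding g_def by (auto simp: fun_eq_iff not_less)
    ultimately show "\<alpha> \<in> (\<lambda>g i. if i < n then g i else 0) ` ({..<n} \<rightarrow>\<^sub>E {..d})" by blast
  qed
  moreover have "finite ({..<n} \<rightarrow>\<^sub>E {..d})" by (intro finite_PiE) auto
  ultimately show ?thesis using finite_surj by blast
qed

lemma ex2_mem: "2 \<le> n \<Longrightarrow> a + b = d \<Longrightarrow> ex2 a b \<in> mono_exps n d"
proof -
  assume n: "2 \<le> n" and ab: "a + b = d"
  have e: "ex2 a b i = (if i = 0 then a else 0) + (if i = 1 then b else 0)" for i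
    unfolding ex2_def by auto
  have "(\<Sum>i<n. ex2 a b i) = a + b"
    unfolding e sum.distrib using n by (simp add: sum.delta)
  then show ?thesis unfolding mono_exps_def ex2_def using n ab by auto
qed

lemma exi_mem: "k < n \<Longrightarrow> exi d k \<in> mono_exps n d"
  unfolding mono_exps_def exi_def by (auto simp: sum.delta)

lemma xp_ex2: "2 \<le> n \<Longrightarrow> xp n (ex2 a b) x = x 0 ^ a * x 1 ^ b"
proof -
  assume n: "2 \<le> n"
  have e: "x i ^ ex2 a b i = (if i = 0 then x 0 ^ a else 1) * (if i = 1 then x 1 ^ b else 1)" for i
    unfolding ex2_def by auto
  show ?thesis unfolding xp_def e prod.distrib using n by (simp add: prod.delta)
qed

lemma xp_exi: "k < n \<Longrightarrow> xp n (exi d k) x = x k ^ d"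
proof -
  assume n: "k < n"
  have e: "x i ^ exi d k i = (if i = k then x k ^ d else 1)" for i
    unfolding exi_def by auto
  show ?thesis unfolding xp_def e using n by (simp add: prod.delta)
qed

lemma eval_xp: "eval_form n d c x = (\<Sum>\<alpha>\<in>mono_exps n d. c \<alpha> * xp n \<alpha> x)"
  unfolding eval_form_def xp_def ..

lemma eval_add: "eval_form n d (\<lambda>\<alpha>. c1 \<alpha> + c2 \<alpha>) x = eval_form n d c1 x + eval_form n d c2 x"
  unfolding eval_form_def by (simp add: distrib_right sum.distrib)

lemma eval_diff: "eval_form n d (\<lambda>\<alpha>. c1 \<alpha> - c2 \<alpha>) x = eval_form n d c1 x - eval_form n d c2 x"
  unfolding eval_form_def by (simp add: left_diff_distrib sum_subtractf)

lemma eval_scale: "eval_form n d (\<lambda>\<alpha>. k * c \<alpha>) x = k * eval_form n d c x"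
  unfolding eval_form_def by (simp add: sum_distrib_left mult.assoc)

lemma eval_sum: "eval_form n d (\<lambda>\<alpha>. \<Sum>i\<in>I. c i \<alpha>) x = (\<Sum>i\<in>I. eval_form n d (c i) x)"
  unfolding eval_form_def by (simp add: sum_distrib_right sum.swap[of _ I])

lemma eval_mon: "\<beta> \<in> mono_exps n d \<Longrightarrow> eval_form n d (mon \<beta>) x = xp n \<beta> x"
proof -
  assume b: "\<beta> \<in> mono_exps n d"
  have h: "(\<lambda>\<alpha>. mon \<beta> \<alpha> * xp n \<alpha> x) = (\<lambda>\<alpha>. if \<alpha> = \<beta> then xp n \<beta> x else 0)"
    unfolding mon_def by auto
  show ?thesis unfolding eval_xp h using finite_mono[of n d] b by (simp add: sum.delta')
qed

definition Aco :: "nat \<Rightarrow> nat \<Rightarrow> (nat \<Rightarrow> nat) \<Rightarrow> real" where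
  "Aco n d = (\<lambda>\<alpha>. mon (ex2 d 0) \<alpha> + mon (ex2 2 (d-2)) \<alpha>)"
definition Bco :: "nat \<Rightarrow> nat \<Rightarrow> (nat \<Rightarrow> nat) \<Rightarrow> real" where
  "Bco n d = (\<lambda>\<alpha>. 2 * mon (ex2 (d-1) 1) \<alpha> + 2 * mon (ex2 1 (d-1)) \<alpha>)"
definition Cco :: "nat \<Rightarrow> nat \<Rightarrow> (nat \<Rightarrow> nat) \<Rightarrow> real" where
  "Cco n d = (\<lambda>\<alpha>. mon (ex2 (d-2) 2) \<alpha> + mon (ex2 0 d) \<alpha> + (\<Sum>k\<in>{2..<n}. mon (exi d k) \<alpha>))"
definition fam :: "nat \<Rightarrow> nat \<Rightarrow> real \<Rightarrow> (nat \<Rightarrow> nat) \<Rightarrow> real" where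
  "fam n d s = (\<lambda>\<alpha>. s^2 * Aco n d \<alpha> + s * Bco n d \<alpha> + Cco n d \<alpha>)"

lemma eval_fam:
  assumes "2 \<le> n" "2 \<le> d"
  shows "eval_form n d (fam n d s) x =
     (s * x 0 + x 1)^2 * (x 0 ^ (d-2) + x 1 ^ (d-2)) + (\<Sum>k\<in>{2..<n}. x k ^ d)"
proof -
  obtain m where m: "d = m + 2" using assms(2) by (metis add.commute le_Suc_ex)
  have mems: "ex2 d 0 \<in> mono_exps n d" "ex2 2 (d-2) \<in> mono_exps n d"
     "ex2 (d-1) 1 \<in> mono_exps n d" "ex2 1 (d-1) \<in> mono_exps n d"
     "ex2 (d-2) 2 \<in> mono_exps n d" "ex2 0 d \<in> mono_exps n d"
    using assms by (auto intro!: ex2_mem)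
  have sm: "(\<Sum>k\<in>{2..<n}. eval_form n d (mon (exi d k)) x) = (\<Sum>k\<in>{2..<n}. x k ^ d)"
    by (rule sum.cong) (auto simp: eval_mon exi_mem xp_exi)
  have "eval_form n d (fam n d s) x = s^2 * (x 0 ^ d + x 0 ^ 2 * x 1 ^ (d-2))
      + s * (2 * (x 0 ^ (d-1) * x 1) + 2 * (x 0 * x 1 ^ (d-1)))
      + (x 0 ^ (d-2) * x 1 ^ 2 + x 1 ^ d + (\<Sum>k\<in>{2..<n}. x k ^ d))"
    unfolding fam_def Aco_def Bco_def Cco_def
    by (simp only: eval_add eval_scale eval_sum eval_mon mems sm xp_ex2 assms(1)) simp
  also have "\<dots> = (s * x 0 + x 1)^2 * (x 0 ^ (d-2) + x 1 ^ (d-2)) + (\<Sum>k\<in>{2..<n}. x k ^ d)"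
    unfolding m by (simp add: power2_eq_square algebra_simps)
  finally show ?thesis .
qed



lemma mon_zero: "\<beta> \<in> mono_exps n d \<Longrightarrow> \<alpha> \<notin> mono_exps n d \<Longrightarrow> mon \<beta> \<alpha> = 0"
  unfolding mon_def by auto

lemma fam_forms:
  assumes "2 \<le> n" "2 \<le> d"
  shows "fam n d s \<in> forms n d"
proof -
  have mems: "ex2 d 0 \<in> mono_exps n d" "ex2 2 (d-2) \<in> mono_exps n d"
     "ex2 (d-1) 1 \<in> mono_exps n d" "ex2 1 (d-1) \<in> mono_exps n d"
     "ex2 (d-2) 2 \<in> mono_exps n d" "ex2 0 d \<in> mono_exps n d"
    using assms by (auto intro!: ex2_mem)
  show ?thesis unfolding forms_def fam_def Aco_def Bco_def Cco_def
  proof (intro CollectI allI impI)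
    fix \<alpha> assume a: "\<alpha> \<notin> mono_exps n d"
    have "(\<Sum>k = 2..<n. mon (exi d k) \<alpha>) = 0"
    proof (intro sum.neutral ballI)
      fix k assume "k \<in> {2..<n}"
      then have "exi d k \<in> mono_exps n d" by (intro exi_mem) auto
      then show "mon (exi d k) \<alpha> = 0" using a by (rule mon_zero)
    qed
    then show "s\<^sup>2 * (mon (ex2 d 0) \<alpha> + mon (ex2 2 (d - 2)) \<alpha>) +
        s * (2 * mon (ex2 (d - 1) 1) \<alpha> + 2 * mon (ex2 1 (d - 1)) \<alpha>) +
        (mon (ex2 (d - 2) 2) \<alpha> + mon (ex2 0 d) \<alpha> + (\<Sum>k = 2..<n. mon (exi d k) \<alpha>)) = 0"
      using mems a by (simp add: mon_zero)
  qed
qed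

lemma fam_eval_nn:
  assumes "2 \<le> n" "2 \<le> d" "\<forall>i<n. 0 \<le> x i"
  shows "0 \<le> eval_form n d (fam n d s) x"
proof -
  have "0 \<le> x 0" "0 \<le> x 1" using assms by auto
  then show ?thesis unfolding eval_fam[OF assms(1,2)] using assms(3)
    by (intro add_nonneg_nonneg mult_nonneg_nonneg sum_nonneg) auto
qed

lemma fam_copos:
  assumes "2 \<le> n" "2 \<le> d"
  shows "fam n d s \<in> copos n d"
  unfolding copos_def using fam_forms[OF assms] fam_eval_nn[OF assms] by auto

lemma xp_bound:
  assumes "\<alpha> \<in> mono_exps n d" "\<forall>i<n. 0 \<le> x i" "1 \<le> n"
  shows "xp n \<alpha> x \<le> (\<Sum>i<n. x i ^ d)"
proof -
  define m where "m = Max (x ` {..<n})"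
  have "0 \<in> {..<n}" using assms(3) by auto
  then have ne: "{..<n} \<noteq> {}" by blast
  have xm: "x i \<le> m" if "i < n" for i unfolding m_def using that by auto
  obtain j where j: "j < n" "m = x j" 
  proof -
    have "m \<in> x ` {..<n}" unfolding m_def using ne by (intro Max_in) auto
    then show ?thesis using that by auto
  qed
  have "xp n \<alpha> x \<le> (\<Prod>i<n. m ^ \<alpha> i)"
    unfolding xp_def using assms(2) xm by (intro prod_mono) (auto intro: power_mono)
  also have "\<dots> = m ^ (\<Sum>i<n. \<alpha> i)" by (simp add: power_sum)
  also have "\<dots> = m ^ d" using assms(1) unfolding mono_exps_def by auto
  also have "\<dots> \<le> (\<Sum>i<n. x i ^ d)" unfolding j(2)
    using j(1) assms(2) by (intro member_le_sum) auto
  finally show ?thesis .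
qed

lemma fam1_ge:
  assumes "2 \<le> n" "2 \<le> d" "\<forall>i<n. 0 \<le> x i"
  shows "(\<Sum>i<n. x i ^ d) \<le> eval_form n d (fam n d 1) x"
proof -
  obtain m where m: "d = m + 2" using assms(2) by (metis add.commute le_Suc_ex)
  have x0: "0 \<le> x 0" and x1: "0 \<le> x 1" using assms by auto
  have split: "{..<n} = {0,1} \<union> {2..<n}" using assms(1) by auto
  have s: "(\<Sum>i<n. x i ^ d) = x 0 ^ d + x 1 ^ d + (\<Sum>k\<in>{2..<n}. x k ^ d)"
    unfolding split by (subst sum.union_disjoint) auto
  have "x 0 ^ d + x 1 ^ d \<le> (x 0 + x 1)^2 * (x 0 ^ (d-2) + x 1 ^ (d-2))"
  proof -
    have a: "x 0 ^ 2 \<le> (x 0 + x 1)^2" using x0 x1 by (intro power_mono) auto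
    have b: "x 1 ^ 2 \<le> (x 0 + x 1)^2" using x0 x1 by (intro power_mono) auto
    have "x 0 ^ d = x 0 ^ 2 * x 0 ^ (d-2)" unfolding m by (simp add: power_add power2_eq_square)
    also have "\<dots> \<le> (x 0 + x 1)^2 * x 0 ^ (d-2)" using a x0 by (intro mult_right_mono) auto
    finally have c: "x 0 ^ d \<le> (x 0 + x 1)^2 * x 0 ^ (d-2)" .
    have "x 1 ^ d = x 1 ^ 2 * x 1 ^ (d-2)" unfolding m by (simp add: power_add power2_eq_square)
    also have "\<dots> \<le> (x 0 + x 1)^2 * x 1 ^ (d-2)" using b x1 by (intro mult_right_mono) auto
    finally have e: "x 1 ^ d \<le> (x 0 + x 1)^2 * x 1 ^ (d-2)" .
    show ?thesis using c e by (simp add: distrib_left)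
  qed
  then show ?thesis unfolding eval_fam[OF assms(1,2)] s by simp
qed

lemma fam1_int:
  assumes "2 \<le> n" "2 \<le> d"
  shows "fam n d 1 \<in> form_interior n d (copos n d)"
proof -
  define N where "N = card (mono_exps n d)"
  define \<epsilon> :: real where "\<epsilon> = 1 / (N + 1)"
  have ep: "\<epsilon> > 0" unfolding \<epsilon>_def by simp
  have "c' \<in> copos n d" if c': "c' \<in> forms n d" "coef_near n d \<epsilon> (fam n d 1) c'" for c'
  proof -
    have "0 \<le> eval_form n d c' x" if x: "\<forall>i<n. 0 \<le> x i" for x
    proof -
      define T where "T = (\<Sum>i<n. x i ^ d)"
      have Tnn: "0 \<le> T" unfolding T_def using x by (auto intro: sum_nonneg)
      have "eval_form n d c' x - eval_form n d (fam n d 1) x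
          = (\<Sum>\<alpha>\<in>mono_exps n d. (c' \<alpha> - fam n d 1 \<alpha>) * xp n \<alpha> x)"
        unfolding eval_xp by (simp add: sum_subtractf left_diff_distrib)
      also have "\<dots> \<ge> (\<Sum>\<alpha>\<in>mono_exps n d. - (\<epsilon> * T))"
      proof (intro sum_mono)
        fix \<alpha> assume a: "\<alpha> \<in> mono_exps n d"
        have xpnn: "0 \<le> xp n \<alpha> x" unfolding xp_def using x by (auto intro: prod_nonneg)
        have xpb: "xp n \<alpha> x \<le> T" unfolding T_def using xp_bound[OF a x] assms(1) by simp
        have "\<bar>fam n d 1 \<alpha> - c' \<alpha>\<bar> < \<epsilon>" using c'(2) a unfolding coef_near_def by auto
        then have "- \<epsilon> \<le> c' \<alpha> - fam n d 1 \<alpha>" by auto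
        then have "- \<epsilon> * xp n \<alpha> x \<le> (c' \<alpha> - fam n d 1 \<alpha>) * xp n \<alpha> x"
          using xpnn by (intro mult_right_mono) auto
        moreover have "- \<epsilon> * T \<le> - \<epsilon> * xp n \<alpha> x" using xpb ep by simp
        ultimately show "- (\<epsilon> * T) \<le> (c' \<alpha> - fam n d 1 \<alpha>) * xp n \<alpha> x" by simp
      qed
      finally have "eval_form n d c' x \<ge> eval_form n d (fam n d 1) x - N * (\<epsilon> * T)"
        unfolding N_def by simp
      moreover have "eval_form n d (fam n d 1) x \<ge> T"
        unfolding T_def using fam1_ge[OF assms x] .
      moreover have "N * (\<epsilon> * T) \<le> T"
      proof -
        have "N * \<epsilon> \<le> 1" unfolding \<epsilon>_def by (simp add: divide_simps)
        then have "(N * \<epsilon>) * T \<le> 1 * T" using Tnn by (intro mult_right_mono) auto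
        then show ?thesis by (simp add: mult.assoc)
      qed
      ultimately show ?thesis by simp
    qed
    then show ?thesis unfolding copos_def using c'(1) by auto
  qed
  then show ?thesis unfolding form_interior_def using ep fam_copos[OF assms] by auto
qed

lemma pert_not_copos:
  assumes "2 \<le> n" "2 \<le> d" "s < 0" "e > 0"
  shows "(\<lambda>\<alpha>. fam n d s \<alpha> - e * mon (exi d 0) \<alpha>) \<notin> copos n d"
proof
  assume h: "(\<lambda>\<alpha>. fam n d s \<alpha> - e * mon (exi d 0) \<alpha>) \<in> copos n d"
  define x where "x = (\<lambda>i::nat. if i = 0 then 1 else if i = 1 then - s else 0::real)"
  have xnn: "\<forall>i<n. 0 \<le> x i" unfolding x_def using assms by auto
  have m0: "exi d 0 \<in> mono_exps n d" using assms by (auto intro: exi_mem)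
  have sm: "(\<Sum>k\<in>{2..<n}. x k ^ d) = 0" unfolding x_def using assms by auto
  have "eval_form n d (\<lambda>\<alpha>. fam n d s \<alpha> - e * mon (exi d 0) \<alpha>) x
      = eval_form n d (fam n d s) x - e * xp n (exi d 0) x"
    by (simp add: eval_diff eval_scale eval_mon m0)
  also have "\<dots> = - e" using assms
    by (simp add: eval_fam sm xp_exi x_def)
  finally have "eval_form n d (\<lambda>\<alpha>. fam n d s \<alpha> - e * mon (exi d 0) \<alpha>) x < 0" using assms by simp
  moreover have "0 \<le> eval_form n d (\<lambda>\<alpha>. fam n d s \<alpha> - e * mon (exi d 0) \<alpha>) x"
    using h xnn unfolding copos_def by blast
  ultimately show False by simp
qed

lemma fam_bd:
  assumes "2 \<le> n" "2 \<le> d" "s < 0"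
  shows "fam n d s \<in> form_boundary n d (copos n d)"
proof -
  have cl: "fam n d s \<in> form_closure n d (copos n d)"
    unfolding form_closure_def coef_near_def using fam_forms[OF assms(1,2)] fam_copos[OF assms(1,2)]
    by (auto intro!: bexI[of _ "fam n d s"])
  have "fam n d s \<notin> form_interior n d (copos n d)"
  proof
    assume "fam n d s \<in> form_interior n d (copos n d)"
    then obtain \<epsilon> where ep: "\<epsilon> > 0" and
      H: "\<forall>c'\<in>forms n d. coef_near n d \<epsilon> (fam n d s) c' \<longrightarrow> c' \<in> copos n d"
      unfolding form_interior_def by auto
    define c' where "c' = (\<lambda>\<alpha>. fam n d s \<alpha> - (\<epsilon>/2) * mon (exi d 0) \<alpha>)"
    have m0: "exi d 0 \<in> mono_exps n d" using assms by (auto intro: exi_mem)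
    have "c' \<in> forms n d" unfolding c'_def using fam_forms[OF assms(1,2)] m0
      unfolding forms_def by (auto simp: mon_zero)
    moreover have "coef_near n d \<epsilon> (fam n d s) c'"
      unfolding coef_near_def c'_def mon_def using ep by auto
    ultimately have "c' \<in> copos n d" using H by auto
    then show False unfolding c'_def using pert_not_copos[OF assms, of "\<epsilon>/2"] ep by simp
  qed
  then show ?thesis using cl unfolding form_boundary_def by auto
qed

lemma fam_poly: "fam n d s \<alpha> = poly [:Cco n d \<alpha>, Bco n d \<alpha>, Aco n d \<alpha>:] s"
  unfolding fam_def by (simp add: power2_eq_square algebra_simps)



lemma poly_zero_neg: "(\<forall>s<0. poly (Q::real poly) s = 0) \<Longrightarrow> Q = 0"
proof (rule ccontr)
  assume h: "\<forall>s<0. poly Q s = 0" "Q \<noteq> 0"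
  have "{..<0::real} \<subseteq> {x. poly Q x = 0}" using h(1) by auto
  then have "finite {..<0::real}" using poly_roots_finite[OF h(2)] finite_subset by blast
  then show False using infinite_Iio by blast
qed

lemma transpose_diff_scale:
  fixes X Y :: "real^'m^'m"
  shows "transpose (X - e *\<^sub>R Y) = transpose X - e *\<^sub>R transpose Y"
  by (simp add: transpose_def vec_eq_iff)

lemma sum_mon_scale:
  fixes A :: "(nat \<Rightarrow> nat) \<Rightarrow> real^'m^'m"
  assumes "\<beta> \<in> mono_exps n d"
  shows "(\<Sum>\<alpha>\<in>mono_exps n d. mon \<beta> \<alpha> *\<^sub>R A \<alpha>) = A \<beta>"
proof -
  have h: "(\<lambda>\<alpha>. mon \<beta> \<alpha> *\<^sub>R A \<alpha>) = (\<lambda>\<alpha>. if \<alpha> = \<beta> then A \<beta> else 0)"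
    unfolding mon_def by auto
  show ?thesis unfolding h using finite_mono[of n d] assms by (simp add: sum.delta')
qed

theorem mainTheorem17:
  fixes n d :: nat
  assumes "2 \<le> d" and "2 \<le> n"
  shows "\<not> (\<exists>\<phi>. poly_in_coeffs n d \<phi> \<and>
              (\<forall>f\<in>form_interior n d (copos n d). 0 < \<phi> f) \<and>
              (\<forall>f\<in>form_boundary n d (copos n d). \<phi> f = 0))
         \<and> \<not> (\<exists>L :: ((nat \<Rightarrow> nat) \<Rightarrow> real) \<Rightarrow> real^'m^'m.
              sym_pencil n d L \<and>
              copos n d = {f \<in> forms n d. psd (L f)} \<and>
              (\<forall>f\<in>form_interior n d (copos n d). pd (L f)))"
proof (intro conjI notI)
  define P where "P = (\<lambda>\<alpha>. [:Cco n d \<alpha>, Bco n d \<alpha>, Aco n d \<alpha>:])"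
  have famP: "fam n d s \<alpha> = poly (P \<alpha>) s" for s \<alpha> unfolding P_def by (rule fam_poly)
  {
    assume "\<exists>\<phi>. poly_in_coeffs n d \<phi> \<and>
              (\<forall>f\<in>form_interior n d (copos n d). 0 < \<phi> f) \<and>
              (\<forall>f\<in>form_boundary n d (copos n d). \<phi> f = 0)"
    then obtain \<phi> B a where
      ph: "\<forall>c. \<phi> c = (\<Sum>\<beta>\<in>B. a \<beta> * (\<Prod>\<alpha>\<in>mono_exps n d. c \<alpha> ^ \<beta> \<alpha>))"
      and int: "\<forall>f\<in>form_interior n d (copos n d). 0 < \<phi> f"
      and bd: "\<forall>f\<in>form_boundary n d (copos n d). \<phi> f = 0"
      unfolding poly_in_coeffs_def by blast
    define Q where "Q = (\<Sum>\<beta>\<in>B. [:a \<beta>:] * (\<Prod>\<alpha>\<in>mono_exps n d. P \<alpha> ^ \<beta> \<alpha>))"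
    have Qe: "poly Q s = \<phi> (fam n d s)" for s
      unfolding Q_def ph[rule_format] by (simp add: poly_sum poly_prod famP)
    have "\<forall>s<0. poly Q s = 0" using Qe bd fam_bd[OF assms(2,1)] by auto
    then have "Q = 0" by (rule poly_zero_neg)
    moreover have "poly Q 1 > 0" using Qe int fam1_int[OF assms(2,1)] by auto
    ultimately show False by simp
  }
  {
    assume "\<exists>L :: ((nat \<Rightarrow> nat) \<Rightarrow> real) \<Rightarrow> real^'m^'m.
              sym_pencil n d L \<and>
              copos n d = {f \<in> forms n d. psd (L f)} \<and>
              (\<forall>f\<in>form_interior n d (copos n d). pd (L f))"
    then obtain L :: "((nat \<Rightarrow> nat) \<Rightarrow> real) \<Rightarrow> real^'m^'m" and A0 A where
      sA0: "transpose A0 = A0" and sA: "\<forall>\<alpha>. transpose (A \<alpha>) = A \<alpha>"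
      and Ld: "\<forall>c. L c = A0 + (\<Sum>\<alpha>\<in>mono_exps n d. c \<alpha> *\<^sub>R A \<alpha>)"
      and cp: "copos n d = {f \<in> forms n d. psd (L f)}"
      and int: "\<forall>f\<in>form_interior n d (copos n d). pd (L f)"
      unfolding sym_pencil_def by blast
    define Pe where "Pe = (\<lambda>i j. [:A0$i$j:] + (\<Sum>\<alpha>\<in>mono_exps n d. smult (A \<alpha> $ i $ j) (P \<alpha>)))"
    have ent: "L (fam n d s) $ i $ j = poly (Pe i j) s" for s i j
      unfolding Ld[rule_format] Pe_def by (simp add: poly_sum famP sum_component mult.commute)
    define D where "D = (\<Sum>p\<in>{p. p permutes (UNIV::'m set)}. [:of_int (sign p):] * (\<Prod>i\<in>UNIV. Pe i (p i)))"
    have De: "poly D s = det (L (fam n d s))" for s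
      unfolding D_def det_def by (simp add: poly_sum poly_prod ent)
    have neg: "det (L (fam n d s)) = 0" if s: "s < 0" for s
    proof (rule ccontr)
      assume dnz: "det (L (fam n d s)) \<noteq> 0"
      define M where "M = L (fam n d s)"
      have psdM: "psd M" unfolding M_def using fam_copos[OF assms(2,1)] cp by auto
      have "\<forall>v. v \<noteq> 0 \<longrightarrow> 0 < v \<bullet> (M *v v)"
        using psd_det_pd[OF psdM] dnz unfolding M_def by blast
      then obtain e where e: "e > 0" "\<forall>v. 0 \<le> v \<bullet> ((M - e *\<^sub>R A (exi d 0)) *v v)"
        using pert by blast
      define c' where "c' = (\<lambda>\<alpha>. fam n d s \<alpha> - e * mon (exi d 0) \<alpha>)"
      have m0: "exi d 0 \<in> mono_exps n d" using assms by (auto intro: exi_mem)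
      have fc: "c' \<in> forms n d" unfolding c'_def using fam_forms[OF assms(2,1)] m0
        unfolding forms_def by (auto simp: mon_zero)
      have "L c' = M - e *\<^sub>R (\<Sum>\<alpha>\<in>mono_exps n d. mon (exi d 0) \<alpha> *\<^sub>R A \<alpha>)"
        unfolding M_def Ld[rule_format] c'_def
        by (simp add: scaleR_left_diff_distrib sum_subtractf scaleR_sum_right)
      also have "\<dots> = M - e *\<^sub>R A (exi d 0)" using sum_mon_scale[OF m0, of A] by simp
      finally have Lc: "L c' = M - e *\<^sub>R A (exi d 0)" .
      have "transpose M = M" using psdM unfolding psd_def by auto
      then have "psd (L c')" unfolding Lc psd_def using e(2) sA
        by (simp add: transpose_diff_scale)
      then have "c' \<in> copos n d" using cp fc by auto
      then show False using pert_not_copos[OF assms(2,1) s e(1)] unfolding c'_def by simp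
    qed
    have "\<forall>s<0. poly D s = 0" using De neg by auto
    then have "D = 0" by (rule poly_zero_neg)
    moreover have "det (L (fam n d 1)) \<noteq> 0"
      using int fam1_int[OF assms(2,1)] pd_det by blast
    ultimately show False using De[of 1] by simp
  }
qed


end
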